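(* Let $\nu_1,\dots,\nu_\beta$ be the centers returned by an $\alpha$-approximation clustering algorithm (as in the context), and suppose $|\mu_r-\mu_s|\ge c\,\phi_\ast\left(\frac1{n_s}+\frac1{n_r}\right)$ for all distinct $r,s$. Then for every $\mathcal T_s$ there exists a center $\nu_s$ with $$|\nu_s-\mu_s|\le 2(\alpha+1)\frac{\phi_\ast}{n_s},$$ and, with the centers so labeled, $\gamma<\frac{2(\alpha+1)}{c}$.
   Context: Points $x_1,\dots,x_N$ are real numbers, each drawn independently from one of $\beta$ distributions with means $\mu_1,\dots,\mu_\beta$; $\mathcal T_s$ is the set of points from distribution $s$, $n_s=|\mathcal T_s|$; $\phi_\ast=\sum_i|x_i-\mathbb{E}(x_i)|$; $c>0$ a constant; $g(S)=\frac1{|S|}\sum_{x\in S}x$. The $\alpha$-approximation algorithm returns $\beta$ centers; $C(x)$ denotes the center of the cluster containing $x$, and the returned centers satisfy $\sum_i|x_i-C(x_i)|\le\alpha\cdot\mathrm{OPT}$, where $\mathrm{OPT}$ is the minimum of this cost over all choices of $\beta$ centers with points assigned to clusters. Define $\Delta_s=|\mu_s-\nu_s|$ and $\gamma=\max_{s,\,r\ne s}\frac{\Delta_s}{|\mu_r-\mu_s|}$. *)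

theory Defs
  imports Complex_Main
begin

text \<open>Points are indexed by i < N; lab i < beta is the distribution point i is drawn
from, so E(x_i) = mu (lab i).  Clusterings use centers indexed by j < beta and an
assignment of points to centers.\<close>

definition T :: "nat \<Rightarrow> (nat \<Rightarrow> nat) \<Rightarrow> nat \<Rightarrow> nat set" where
  "T N lab s = {i. i < N \<and> lab i = s}"

definition phi_star :: "nat \<Rightarrow> (nat \<Rightarrow> real) \<Rightarrow> (nat \<Rightarrow> nat) \<Rightarrow> (nat \<Rightarrow> real) \<Rightarrow> real" where
  "phi_star N x lab mu = (\<Sum>i<N. \<bar>x i - mu (lab i)\<bar>)"

definition clust_cost :: "nat \<Rightarrow> (nat \<Rightarrow> real) \<Rightarrow> (nat \<Rightarrow> real) \<Rightarrow> (nat \<Rightarrow> nat) \<Rightarrow> real" where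
  "clust_cost N x cen asg = (\<Sum>i<N. \<bar>x i - cen (asg i)\<bar>)"

definition OPT :: "nat \<Rightarrow> nat \<Rightarrow> (nat \<Rightarrow> real) \<Rightarrow> real" where
  "OPT N beta x = Inf {clust_cost N x cen asg | cen asg. \<forall>i<N. asg i < beta}"

definition gamma :: "nat \<Rightarrow> (nat \<Rightarrow> real) \<Rightarrow> (nat \<Rightarrow> real) \<Rightarrow> real" where
  "gamma beta mu nu = Max {\<bar>mu s - nu s\<bar> / \<bar>mu r - mu s\<bar> | s r. s < beta \<and> r < beta \<and> r \<noteq> s}"

end

theory Submission
  imports Defs
begin

lemma avg_exists:
  fixes f :: "nat \<Rightarrow> real"
  assumes "finite A" "A \<noteq> {}"
  shows "\<exists>i\<in>A. real (card A) * f i \<le> sum f A"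
proof -
  let ?m = "Min (f ` A)"
  have m: "?m \<in> f ` A" using assms by simp
  have "real (card A) * ?m \<le> sum f A"
    by (rule sum_bounded_below) (use assms in simp)
  with m show ?thesis by auto
qed

theorem lemma7:
  fixes N beta :: nat and x :: "nat \<Rightarrow> real" and lab :: "nat \<Rightarrow> nat"
    and mu :: "nat \<Rightarrow> real" and c alpha :: real
    and cen :: "nat \<Rightarrow> real" and C :: "nat \<Rightarrow> nat"
  assumes beta: "beta \<ge> 2"
    and lab: "\<forall>i<N. lab i < beta"
    and nonempty: "\<forall>s<beta. card (T N lab s) > 0"
    and c: "c > 0"
    and alpha: "alpha \<ge> 1"
    and C: "\<forall>i<N. C i < beta"
    and approx: "clust_cost N x cen C \<le> alpha * OPT N beta x"
    and sep: "\<forall>r<beta. \<forall>s<beta. r \<noteq> s \<longrightarrow>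
       \<bar>mu r - mu s\<bar> \<ge> c * phi_star N x lab mu * (1 / card (T N lab s) + 1 / card (T N lab r))"
  shows "\<exists>\<sigma>. (\<forall>s<beta. \<sigma> s < beta \<and>
            \<bar>cen (\<sigma> s) - mu s\<bar> \<le> 2 * (alpha + 1) * phi_star N x lab mu / card (T N lab s))
          \<and> gamma beta mu (cen \<circ> \<sigma>) < 2 * (alpha + 1) / c"
proof -
  define \<phi> where "\<phi> = phi_star N x lab mu"
  define n where "n s = real (card (T N lab s))" for s
  have phi0: "\<phi> \<ge> 0" unfolding \<phi>_def phi_star_def by (simp add: sum_nonneg)
  have "OPT N beta x \<le> \<phi>"
  proof -
    have mem: "\<phi> \<in> {clust_cost N x cen asg | cen asg. \<forall>i<N. asg i < beta}"
      unfolding \<phi>_def phi_star_def clust_cost_def using lab by blast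
    have "bdd_below {clust_cost N x cen asg | cen asg. \<forall>i<N. asg i < beta}"
      by (rule bdd_belowI[of _ 0]) (auto simp: clust_cost_def sum_nonneg)
    then show ?thesis unfolding OPT_def by (rule cInf_lower[OF mem])
  qed
  then have cost: "clust_cost N x cen C \<le> alpha * \<phi>"
    using approx alpha by (meson dual_order.trans less_eq_real_def mult_left_mono zero_le_one order_trans)
  have key: "\<exists>j<beta. n s * \<bar>cen j - mu s\<bar> \<le> (alpha + 1) * \<phi>" if s: "s < beta" for s
  proof -
    have fin: "finite (T N lab s)" unfolding T_def by simp
    have ne: "T N lab s \<noteq> {}" using nonempty s by (metis card.empty less_irrefl)
    obtain i where i: "i \<in> T N lab s"
      and ii: "n s * \<bar>cen (C i) - mu s\<bar> \<le> (\<Sum>k\<in>T N lab s. \<bar>cen (C k) - mu s\<bar>)"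
      using avg_exists[OF fin ne, of "\<lambda>k. \<bar>cen (C k) - mu s\<bar>"] unfolding n_def by auto
    have "(\<Sum>k\<in>T N lab s. \<bar>cen (C k) - mu s\<bar>)
        \<le> (\<Sum>k\<in>T N lab s. \<bar>x k - cen (C k)\<bar> + \<bar>x k - mu (lab k)\<bar>)"
      by (rule sum_mono) (auto simp: T_def)
    also have "\<dots> \<le> (\<Sum>k<N. \<bar>x k - cen (C k)\<bar> + \<bar>x k - mu (lab k)\<bar>)"
      by (rule sum_mono2) (auto simp: T_def)
    also have "\<dots> = clust_cost N x cen C + \<phi>"
      unfolding clust_cost_def \<phi>_def phi_star_def by (simp add: sum.distrib)
    also have "\<dots> \<le> (alpha + 1) * \<phi>" using cost by (simp add: algebra_simps)
    finally have "n s * \<bar>cen (C i) - mu s\<bar> \<le> (alpha + 1) * \<phi>" using ii by linarith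
    moreover have "C i < beta" using C i by (auto simp: T_def)
    ultimately show ?thesis by blast
  qed
  define \<sigma> where "\<sigma> s = (SOME j. j < beta \<and> n s * \<bar>cen j - mu s\<bar> \<le> (alpha + 1) * \<phi>)" for s
  have sig: "\<sigma> s < beta \<and> n s * \<bar>cen (\<sigma> s) - mu s\<bar> \<le> (alpha + 1) * \<phi>" if "s < beta" for s
    unfolding \<sigma>_def by (rule someI_ex) (use key[OF that] in blast)
  have npos: "n s > 0" if "s < beta" for s using nonempty that unfolding n_def by simp
  have bound: "\<bar>cen (\<sigma> s) - mu s\<bar> \<le> (alpha + 1) * \<phi> / n s" if "s < beta" for s
    using sig[OF that] npos[OF that] by (simp add: pos_le_divide_eq mult.commute)
  have part1: "\<forall>s<beta. \<sigma> s < beta \<and>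
            \<bar>cen (\<sigma> s) - mu s\<bar> \<le> 2 * (alpha + 1) * phi_star N x lab mu / card (T N lab s)"
  proof (intro allI impI conjI)
    fix s assume s: "s < beta"
    show "\<sigma> s < beta" using sig[OF s] by blast
    have "(alpha + 1) * \<phi> / n s \<le> 2 * (alpha + 1) * \<phi> / n s"
      using npos[OF s] phi0 alpha by (intro divide_right_mono mult_right_mono) auto
    then show "\<bar>cen (\<sigma> s) - mu s\<bar> \<le> 2 * (alpha + 1) * phi_star N x lab mu / card (T N lab s)"
      using bound[OF s] unfolding \<phi>_def n_def by linarith
  qed
  define S where "S = {\<bar>mu s - (cen \<circ> \<sigma>) s\<bar> / \<bar>mu r - mu s\<bar> | s r. s < beta \<and> r < beta \<and> r \<noteq> s}"
  have Sfin: "finite S"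
  proof -
    have "S \<subseteq> (\<lambda>(s,r). \<bar>mu s - (cen \<circ> \<sigma>) s\<bar> / \<bar>mu r - mu s\<bar>) ` ({..<beta} \<times> {..<beta})"
      unfolding S_def by auto
    then show ?thesis by (rule finite_subset) simp
  qed
  have Sne: "S \<noteq> {}"
  proof -
    have "\<bar>mu 0 - (cen \<circ> \<sigma>) 0\<bar> / \<bar>mu 1 - mu 0\<bar> \<in> S"
      unfolding S_def using beta by force
    then show ?thesis by blast
  qed
  have Sbd: "y \<le> (alpha + 1) / c" if ys: "y \<in> S" for y
  proof -
    obtain s r where sr: "s < beta" "r < beta" "r \<noteq> s"
      and y: "y = \<bar>mu s - cen (\<sigma> s)\<bar> / \<bar>mu r - mu s\<bar>"
      using ys unfolding S_def by auto
    have b: "\<bar>mu s - cen (\<sigma> s)\<bar> \<le> (alpha + 1) * \<phi> / n s" using bound[OF sr(1)] by (simp add: abs_minus_commute)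
    have d: "\<bar>mu r - mu s\<bar> \<ge> c * \<phi> * (1 / n s + 1 / n r)"
      using sep sr unfolding \<phi>_def n_def by auto
    have ns: "n s > 0" "n r > 0" using npos sr by auto
    show ?thesis
    proof (cases "\<phi> = 0")
      case True
      then have "\<bar>mu s - cen (\<sigma> s)\<bar> = 0" using b by simp
      then show ?thesis using y c alpha by simp
    next
      case False
      then have pp: "\<phi> > 0" using phi0 by simp
      have d2: "\<bar>mu r - mu s\<bar> \<ge> c * \<phi> / n s"
      proof -
        have "c * \<phi> / n s \<le> c * \<phi> * (1 / n s + 1 / n r)"
          using ns c pp by (simp add: field_simps)
        then show ?thesis using d by linarith
      qed
      have dpos: "c * \<phi> / n s > 0" using c pp ns by simp
      have "y \<le> ((alpha + 1) * \<phi> / n s) / (c * \<phi> / n s)"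
        unfolding y
        apply (rule frac_le) using alpha pp ns b d2 dpos by auto
      also have "\<dots> = (alpha + 1) / c" using pp ns c by (simp add: field_simps)
      finally show ?thesis .
    qed
  qed
  have "gamma beta mu (cen \<circ> \<sigma>) = Max S" unfolding gamma_def S_def by simp
  also have "\<dots> \<le> (alpha + 1) / c" using Sfin Sne Sbd by simp
  also have "\<dots> < 2 * (alpha + 1) / c" using alpha c by (simp add: divide_strict_right_mono)
  finally show ?thesis using part1 by blast
qed

end
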